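(* Let $m\in\mathbb{N}$ be odd and write $m=2k+1$. Let $\varepsilon=1$ if $k$ is even and $3\nmid k$, and $\varepsilon=0$ otherwise. Then the friendship graph $F_j$ is $\mathbb{Z}_m$-cordial for every integer $j$ with $\lfloor m/2\rfloor\le j\le\lfloor 2m/3\rfloor-\varepsilon$.
   Context: Graphs are finite, simple and undirected. For $n\in\mathbb{N}$, the friendship graph $F_n$ is the union of $n$ copies of the triangle $C_3$ joined at a single common (central) vertex. For an abelian group $A$ and a graph $G=(V,E)$, a vertex labeling $\ell:V\to A$ induces an edge labeling $\ell(\{v_1,v_2\})=\ell(v_1)+\ell(v_2)$. Let $f_V(a)=|\{v\in V:\ell(v)=a\}|$ and $f_E(a)=|\{e\in E:\ell(e)=a\}|$. The labeling is $A$-cordial if $|f_V(a_1)-f_V(a_2)|\le 1$ and $|f_E(a_1)-f_E(a_2)|\le 1$ for all $a_1,a_2\in A$; $G$ is $A$-cordial if it admits an $A$-cordial labeling. *)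

theory Defs
  imports Main
begin

text \<open>A finite simple graph is given by a vertex set V and a set E of 2-element
  subsets of V. The cyclic group Z_m is represented by the residues {0..<m}
  with addition modulo m.\<close>

definition friendship_verts :: "nat \<Rightarrow> nat set" where
  "friendship_verts n = {0..2*n}"

definition friendship_edges :: "nat \<Rightarrow> nat set set" where
  "friendship_edges n =
     {{0, i} | i. i \<in> {1..2*n}} \<union> {{2*i - 1, 2*i} | i. i \<in> {1..n}}"

definition edge_label :: "nat \<Rightarrow> ('a \<Rightarrow> nat) \<Rightarrow> 'a set \<Rightarrow> nat" where
  "edge_label m l e = (\<Sum>v\<in>e. l v) mod m"

definition vcount :: "'a set \<Rightarrow> ('a \<Rightarrow> nat) \<Rightarrow> nat \<Rightarrow> nat" where
  "vcount V l a = card {v\<in>V. l v = a}"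

definition ecount :: "nat \<Rightarrow> 'a set set \<Rightarrow> ('a \<Rightarrow> nat) \<Rightarrow> nat \<Rightarrow> nat" where
  "ecount m E l a = card {e\<in>E. edge_label m l e = a}"

definition Zm_cordial_labeling :: "nat \<Rightarrow> 'a set \<Rightarrow> 'a set set \<Rightarrow> ('a \<Rightarrow> nat) \<Rightarrow> bool" where
  "Zm_cordial_labeling m V E l \<longleftrightarrow>
     (\<forall>v\<in>V. l v < m) \<and>
     (\<forall>a1<m. \<forall>a2<m.
        \<bar>int (vcount V l a1) - int (vcount V l a2)\<bar> \<le> 1 \<and>
        \<bar>int (ecount m E l a1) - int (ecount m E l a2)\<bar> \<le> 1)"

definition Zm_cordial :: "nat \<Rightarrow> 'a set \<Rightarrow> 'a set set \<Rightarrow> bool" where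
  "Zm_cordial m V E \<longleftrightarrow> (\<exists>l. Zm_cordial_labeling m V E l)"

end

theory Submission
  imports Defs "HOL-Library.Multiset"
begin


definition Lab :: "nat \<Rightarrow> int \<Rightarrow> nat" where "Lab m w = nat (w mod int m)"

definition labf :: "nat \<Rightarrow> (int\<times>int\<times>int) list \<Rightarrow> nat \<Rightarrow> nat" where
 "labf m TL v = (if v = 0 then 0 else if odd v then Lab m (fst (TL ! ((v-1) div 2)))
      else Lab m (fst (snd (TL ! ((v-1) div 2)))))"

lemma count_image_mset_set:
  assumes "finite A" shows "count (image_mset f (mset_set A)) x = card {a\<in>A. f a = x}"
proof -
  have "count (image_mset f (mset_set A)) x = (\<Sum>y | y \<in># mset_set A \<and> x = f y. count (mset_set A) y)"
    by (rule count_image_mset')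
  also have "\<dots> = (\<Sum>y | y \<in> A \<and> x = f y. 1)"
    using assms by (intro sum.cong) auto
  also have "\<dots> = card {a\<in>A. f a = x}" by (simp add: eq_commute)
  finally show ?thesis .
qed

lemma mset_map_nth: "mset (map f xs) = image_mset (\<lambda>i. f (xs ! i)) (mset_set {0..<length xs})"
proof -
  have "map f xs = map (\<lambda>i. f (xs ! i)) [0..<length xs]"
    by (rule nth_equalityI) auto
  then show ?thesis by simp
qed

lemma verts_split1: "{1..2*j} = (\<lambda>i. 2*i+1) ` {0..<j} \<union> (\<lambda>i. 2*i+2) ` {0..<(j::nat)}"
proof (rule set_eqI)
  fix v show "v \<in> {1..2*j} \<longleftrightarrow> v \<in> (\<lambda>i. 2*i+1) ` {0..<j} \<union> (\<lambda>i. 2*i+2) ` {0..<j}"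
  proof
    assume v: "v \<in> {1..2*j}"
    show "v \<in> (\<lambda>i. 2*i+1) ` {0..<j} \<union> (\<lambda>i. 2*i+2) ` {0..<j}"
    proof (cases "odd v")
      case True
      then have "v = 2*((v-1) div 2)+1" "(v-1) div 2 \<in> {0..<j}" using v by auto
      then show ?thesis by (intro UnI1 rev_image_eqI[where x="(v-1) div 2"]) auto
    next
      case F2: False
      then have "v = 2*((v-1) div 2)+2" "(v-1) div 2 \<in> {0..<j}" using v by auto
      then show ?thesis by (intro UnI2 rev_image_eqI[where x="(v-1) div 2"]) auto
    qed
  qed auto
qed

lemma verts_split0: "{0..2*j} = insert 0 {1..2*(j::nat)}"
  by auto

lemma Lab_lt: "m > 0 \<Longrightarrow> Lab m w < m"
  unfolding Lab_def by (simp add: nat_less_iff)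

lemma Lab0[simp]: "Lab m 0 = 0" unfolding Lab_def by simp

lemma labf_verts:
  assumes "length TL = j"
  shows "image_mset (labf m TL) (mset_set {1..2*j}) =
     image_mset (Lab m) (mset (map fst TL) + mset (map (fst \<circ> snd) TL))"
proof -
  note s = verts_split1[of j]
  have "mset_set {1..2*j} = mset_set ((\<lambda>i. 2*i+1) ` {0..<j}) + mset_set ((\<lambda>i. 2*i+2) ` {0..<(j::nat)})"
    unfolding s apply (rule mset_set_Union) apply auto by presburger
  also have "\<dots> = image_mset (\<lambda>i. 2*i+1) (mset_set {0..<j}) + image_mset (\<lambda>i. 2*i+2) (mset_set {0..<j})"
    by (subst (1 2) image_mset_mset_set) (auto simp: inj_on_def)
  finally have 1: "mset_set {1..2*j} = \<dots>" .
  have a: "image_mset (labf m TL \<circ> (\<lambda>i. 2*i+1)) (mset_set {0..<j}) = image_mset (Lab m \<circ> (\<lambda>i. fst (TL ! i))) (mset_set {0..<j})"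
    by (rule image_mset_cong) (simp add: labf_def)
  have b: "image_mset (labf m TL \<circ> (\<lambda>i. 2*i+2)) (mset_set {0..<j}) = image_mset (Lab m \<circ> (\<lambda>i. fst (snd (TL ! i)))) (mset_set {0..<j})"
    by (rule image_mset_cong) (simp add: labf_def)
  have c: "mset (map fst TL) = image_mset (\<lambda>i. fst (TL!i)) (mset_set {0..<j})"
    by (simp only: mset_map_nth assms)
  have d: "mset (map (fst \<circ> snd) TL) = image_mset (\<lambda>i. fst (snd (TL!i))) (mset_set {0..<j})"
    by (simp only: mset_map_nth assms o_def)
  show ?thesis
    unfolding 1 image_mset_union image_mset.compositionality a b c d ..
qed

lemma edges_eq: "friendship_edges j = (\<lambda>i. {0,i}) ` {1..2*j} \<union> (\<lambda>i. {2*i+1, 2*i+2}) ` {0..<j}"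
proof -
  have 1: "{{0, i} | i. i \<in> {1..2*j}} = (\<lambda>i. {0,i}) ` {1..2*j}" by blast
  have 2: "{{2*i - 1, 2*i} | i. i \<in> {1..j}} = (\<lambda>i. {2*i+1, 2*i+2}) ` {0..<j}"
  proof (rule set_eqI, rule iffI)
    fix x assume "x \<in> {{2*i - 1, 2*i} | i. i \<in> {1..j}}"
    then obtain i where i: "x = {2*i - 1, 2*i}" "i \<in> {1..j}" by blast
    then have "x = (\<lambda>i. {2*i+1, 2*i+2}) (i - 1)" "i - 1 \<in> {0..<j}" by auto
    then show "x \<in> (\<lambda>i. {2*i+1, 2*i+2}) ` {0..<j}" by blast
  next
    fix x assume "x \<in> (\<lambda>i. {2*i+1, 2*i+2}) ` {0..<j}"
    then obtain i where i: "x = {2*i+1, 2*i+2}" "i < j" by auto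
    then have "x = {2*(i+1) - 1, 2*(i+1)}" "i + 1 \<in> {1..j}" by auto
    then show "x \<in> {{2*i - 1, 2*i} | i. i \<in> {1..j}}" by blast
  qed
  show ?thesis unfolding friendship_edges_def 1 2 ..
qed

lemma mset_edges: "mset_set (friendship_edges j) =
   image_mset (\<lambda>i. {0,i}) (mset_set {1..2*j}) + image_mset (\<lambda>i. {2*i+1, 2*i+2}) (mset_set {0..<j})"
proof -
  have "mset_set (friendship_edges j) = mset_set ((\<lambda>i. {0,i}) ` {1..2*j}) + mset_set ((\<lambda>i. {2*i+1, 2*i+2}) ` {0..<j})"
    unfolding edges_eq by (rule mset_set_Union) auto
  also have "\<dots> = image_mset (\<lambda>i. {0,i}) (mset_set {1..2*j}) + image_mset (\<lambda>i. {2*i+1, 2*i+2}) (mset_set {0..<j})"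
  proof -
    have i1: "inj_on (\<lambda>i. {0::nat,i}) {1..2*j}" by (auto simp: inj_on_def doubleton_eq_iff)
    have i2: "inj_on (\<lambda>i. {2*i+1, 2*i+2::nat}) {0..<j}"
      by (clarsimp simp: inj_on_def doubleton_eq_iff; presburger)
    show ?thesis unfolding image_mset_mset_set[OF i1] image_mset_mset_set[OF i2] ..
  qed
  finally show ?thesis .
qed

lemma Lab_add:
  assumes "m > 0" "int m dvd (a + b - c)"
  shows "(Lab m a + Lab m b) mod m = Lab m c"
proof -
  have "int ((Lab m a + Lab m b) mod m) = (a mod int m + b mod int m) mod int m"
    unfolding Lab_def using assms(1) by (simp add: of_nat_mod)
  also have "\<dots> = (a + b) mod int m" by (simp add: mod_add_eq)
  also have "\<dots> = c mod int m" using assms(2) by (simp add: mod_eq_dvd_iff)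
  also have "\<dots> = int (Lab m c)" unfolding Lab_def using assms(1) by simp
  finally show ?thesis by simp
qed

lemma labf_edges:
  assumes "length TL = j" "m > 0"
    and cong: "\<forall>t\<in>set TL. int m dvd (fst t + fst (snd t) - snd (snd t))"
  shows "image_mset (edge_label m (labf m TL)) (mset_set (friendship_edges j)) =
     image_mset (Lab m) (mset (map fst TL) + mset (map (fst \<circ> snd) TL) + mset (map (snd \<circ> snd) TL))"
proof -
  let ?l = "labf m TL"
  have lt: "?l v < m" for v using assms(2) by (simp add: labf_def Lab_lt)
  have a: "image_mset (edge_label m ?l \<circ> (\<lambda>i. {0,i})) (mset_set {1..2*j}) = image_mset ?l (mset_set {1..2*j})"
    by (rule image_mset_cong) (auto simp: edge_label_def labf_def lt Lab_lt assms(2))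
  have b: "image_mset (edge_label m ?l \<circ> (\<lambda>i. {2*i+1, 2*i+2})) (mset_set {0..<j}) =
        image_mset (Lab m \<circ> (\<lambda>i. snd (snd (TL!i)))) (mset_set {0..<j})"
  proof (rule image_mset_cong)
    fix i assume "i \<in># mset_set {0..<j}"
    then have "i < j" by simp
    then have "TL ! i \<in> set TL" using assms(1) by simp
    then have "int m dvd (fst (TL!i) + fst (snd (TL!i)) - snd (snd (TL!i)))" using cong by blast
    then show "(edge_label m ?l \<circ> (\<lambda>i. {2*i+1, 2*i+2})) i = (Lab m \<circ> (\<lambda>i. snd (snd (TL!i)))) i"
      using assms(2) by (simp add: edge_label_def labf_def Lab_add)
  qed
  have d: "mset (map (snd \<circ> snd) TL) = image_mset (\<lambda>i. snd (snd (TL!i))) (mset_set {0..<j})"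
    by (simp only: mset_map_nth assms(1) o_def)
  show ?thesis
    unfolding mset_edges image_mset_union image_mset.compositionality a b labf_verts[OF assms(1)] d ..
qed

lemma Lab_inj: "inj_on (Lab (2*k+1)) {-int k..int k}"
proof (rule inj_onI)
  fix x y assume x: "x \<in> {-int k..int k}" and y: "y \<in> {-int k..int k}" and e: "Lab (2*k+1) x = Lab (2*k+1) y"
  have "x mod int (2*k+1) = y mod int (2*k+1)"
    using e unfolding Lab_def by (simp add: eq_nat_nat_iff)
  then have "int (2*k+1) dvd (x - y)" by (simp add: mod_eq_dvd_iff)
  then have "(2*int k+1) dvd (x - y)" by (simp add: ac_simps)
  then obtain q where q: "x - y = (2*int k+1) * q" by (auto simp: dvd_def)
  have "q = 0"
  proof (rule ccontr)
    assume "q \<noteq> 0"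
    then have "\<bar>(2*int k+1) * q\<bar> \<ge> 2*int k+1" by (simp add: abs_mult)
    then show False using x y q by auto
  qed
  then show "x = y" using q by simp
qed

lemma Lab_surj: assumes "x < 2*k+1" shows "x \<in> Lab (2*k+1) ` {-int k..int k}"
proof (cases "x \<le> k")
  case True
  then have "Lab (2*k+1) (int x) = x" unfolding Lab_def using assms by simp
  then show ?thesis using True by force
next
  case False
  have lab: "Lab (2*k+1) (int x - int (2*k+1)) = x" unfolding Lab_def using assms
    by (simp add: minus_mod_self2)
  have mem: "int x - int (2*k+1) \<in> {-int k..int k}" using False assms by auto
  show ?thesis by (rule image_eqI[where f="Lab (2*k+1)", OF lab[symmetric] mem])
qed

lemma count_full:
  assumes "distinct W" "set W \<subseteq> {-int k..int k}" "length W = 2*k+1" "x < 2*k+1"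
  shows "count (image_mset (Lab (2*k+1)) (mset W)) x = 1"
proof -
  have "card (set W) = card {-int k..int k}" using assms(1,3) by (simp add: distinct_card)
  then have sw: "set W = {-int k..int k}" using assms(2) by (intro card_subset_eq) auto
  have "distinct (map (Lab (2*k+1)) W)" using assms(1) Lab_inj sw by (simp add: distinct_map)
  moreover have "x \<in> set (map (Lab (2*k+1)) W)" using Lab_surj[OF assms(4)] sw by simp
  ultimately show ?thesis by (simp add: distinct_count_atmost_1 del: mset_map flip: mset_map)
qed

lemma count_part:
  assumes "distinct W" "set W \<subseteq> {-int k..int k}"
  shows "count (image_mset (Lab (2*k+1)) (mset W)) x \<le> 1"
proof -
  have "distinct (map (Lab (2*k+1)) W)" using assms inj_on_subset[OF Lab_inj assms(2)] by (simp add: distinct_map)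
  then show ?thesis by (simp add: distinct_count_atmost_1 del: mset_map flip: mset_map)
qed

lemma generic:
  fixes k j :: nat and TL :: "(int\<times>int\<times>int) list" and V1 V2 E1 E2 :: "int list"
  assumes m: "m = 2*k+1" and len: "length TL = j"
    and cong: "\<forall>t\<in>set TL. int m dvd (fst t + fst (snd t) - snd (snd t))"
    and VM: "mset V1 + mset V2 = add_mset 0 (mset (map fst TL) + mset (map (fst \<circ> snd) TL))"
    and EM: "mset E1 + mset E2 = mset (map fst TL) + mset (map (fst \<circ> snd) TL) + mset (map (snd \<circ> snd) TL)"
    and dist: "distinct V1" "distinct V2" "distinct E1" "distinct E2"
    and rng: "set V1 \<subseteq> {-int k..int k}" "set V2 \<subseteq> {-int k..int k}"
        "set E1 \<subseteq> {-int k..int k}" "set E2 \<subseteq> {-int k..int k}"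
    and lens: "length V1 = m" "length E1 = m"
  shows "Zm_cordial m (friendship_verts j) (friendship_edges j)"
proof -
  let ?l = "labf m TL"
  have mpos: "m > 0" using m by simp
  have vc: "vcount (friendship_verts j) ?l x \<in> {1,2}" if "x < m" for x
  proof -
    have "vcount (friendship_verts j) ?l x = count (image_mset ?l (mset_set {0..2*j})) x"
      unfolding vcount_def friendship_verts_def by (simp add: count_image_mset_set)
    also have "image_mset ?l (mset_set {0..2*j}) = image_mset (Lab m) (mset V1 + mset V2)"
      unfolding verts_split0 VM using labf_verts[OF len, of m] by (simp add: labf_def)
    finally have "vcount (friendship_verts j) ?l x =
       count (image_mset (Lab m) (mset V1)) x + count (image_mset (Lab m) (mset V2)) x" by simp
    moreover have "count (image_mset (Lab m) (mset V1)) x = 1"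
      using count_full[OF dist(1) rng(1)] lens that m by simp
    moreover have "count (image_mset (Lab m) (mset V2)) x \<le> 1"
      using count_part[OF dist(2) rng(2)] m by simp
    ultimately show ?thesis by auto
  qed
  have ec: "ecount m (friendship_edges j) ?l x \<in> {1,2}" if "x < m" for x
  proof -
    have "ecount m (friendship_edges j) ?l x = count (image_mset (edge_label m ?l) (mset_set (friendship_edges j))) x"
      unfolding ecount_def by (simp add: count_image_mset_set edges_eq)
    also have "image_mset (edge_label m ?l) (mset_set (friendship_edges j)) = image_mset (Lab m) (mset E1 + mset E2)"
      unfolding labf_edges[OF len mpos cong] EM ..
    finally have "ecount m (friendship_edges j) ?l x =
       count (image_mset (Lab m) (mset E1)) x + count (image_mset (Lab m) (mset E2)) x" by simp
    moreover have "count (image_mset (Lab m) (mset E1)) x = 1"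
      using count_full[OF dist(3) rng(3)] lens that m by simp
    moreover have "count (image_mset (Lab m) (mset E2)) x \<le> 1"
      using count_part[OF dist(4) rng(4)] m by simp
    ultimately show ?thesis by auto
  qed
  have "Zm_cordial_labeling m (friendship_verts j) (friendship_edges j) ?l"
    unfolding Zm_cordial_labeling_def
  proof (intro conjI ballI allI impI)
    fix v show "?l v < m" using mpos by (simp add: labf_def Lab_lt)
  next
    fix a1 a2 assume "a1 < m" "a2 < m"
    then show "\<bar>int (vcount (friendship_verts j) ?l a1) - int (vcount (friendship_verts j) ?l a2)\<bar> \<le> 1"
      using vc[of a1] vc[of a2] by auto
  next
    fix a1 a2 assume "a1 < m" "a2 < m"
    then show "\<bar>int (ecount m (friendship_edges j) ?l a1) - int (ecount m (friendship_edges j) ?l a2)\<bar> \<le> 1"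
      using ec[of a1] ec[of a2] by auto
  qed
  then show ?thesis unfolding Zm_cordial_def by blast
qed



lemma famX:
  fixes k j r p :: nat
  assumes m: "m = 2*k+1" and j: "j = k + r" and r3: "3*r \<le> k+1" and p1: "p \<ge> 1"
    and np: "k - r = 2*p - 1 \<or> k - r = 2*p" and rk: "r \<le> k"
  shows "Zm_cordial m (friendship_verts j) (friendship_edges j)"
proof -
  define K where "K = int k"
  define R where "R = int r"
  define P where "P = int p"
  define n where "n = K - R"
  define M where "M = 2*K+1"
  have hyp: "3*R \<le> K+1" "P \<ge> 1" "n = 2*P - 1 \<or> n = 2*P" "R \<ge> 0" "R \<le> K"
    using r3 p1 np rk unfolding K_def R_def P_def n_def by auto
  have Mm: "int m = M" unfolding M_def K_def m by simp
  define I where "I = [1..P-1]"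
  define Z where "Z = [2*P..n]"
  define D where "D = [n+1..K]"
  define f1 where "f1 = (\<lambda>i::int. (P-i, -(P+i), -2*i))"
  define f2 where "f2 = (\<lambda>i::int. (P+i, -(P-i), 2*i))"
  define f4 where "f4 = (\<lambda>x::int. (x,-x,0::int))"
  define f5 where "f5 = (\<lambda>b::int. (b,b,2*b-M))"
  define f6 where "f6 = (\<lambda>b::int. (-b,-b,M-2*b))"
  define TL where "TL = map f1 I @ map f2 I @ [(P,-P,0)] @ map f4 Z @ map f5 D @ map f6 D"
  define V1 where "V1 = 0 # map (fst\<circ>f1) I @ map ((fst\<circ>snd)\<circ>f1) I @ map (fst\<circ>f2) I @ map ((fst\<circ>snd)\<circ>f2) I
      @ [P, -P] @ map (fst\<circ>f4) Z @ map ((fst\<circ>snd)\<circ>f4) Z @ map (fst\<circ>f5) D @ map (fst\<circ>f6) D"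
  define V2 where "V2 = map ((fst\<circ>snd)\<circ>f5) D @ map ((fst\<circ>snd)\<circ>f6) D"
  define E2 where "E2 = V2 @ map ((snd\<circ>snd)\<circ>f1) I @ map ((snd\<circ>snd)\<circ>f2) I @ map ((snd\<circ>snd)\<circ>f4) Z
      @ map ((snd\<circ>snd)\<circ>f5) D @ map ((snd\<circ>snd)\<circ>f6) D"
  have len: "length TL = j"
  proof -
    have "int (length TL) = K + R" unfolding TL_def I_def Z_def D_def using hyp by (auto simp: n_def distinct_map inj_on_def)
    then show ?thesis unfolding j K_def R_def by simp
  qed
  have cong: "\<forall>t\<in>set TL. int m dvd (fst t + fst (snd t) - snd (snd t))"
    unfolding Mm TL_def f1_def f2_def f4_def f5_def f6_def by auto
  have VM: "mset V1 + mset V2 = add_mset 0 (mset (map fst TL) + mset (map (fst \<circ> snd) TL))"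
    unfolding V1_def V2_def TL_def by (simp add: ac_simps add_mset_commute)
  have EM: "mset V1 + mset E2 = mset (map fst TL) + mset (map (fst \<circ> snd) TL) + mset (map (snd \<circ> snd) TL)"
    unfolding V1_def V2_def E2_def TL_def by (simp add: ac_simps add_mset_commute)
  have lenV1: "length V1 = m"
  proof -
    have "int (length V1) = M" unfolding V1_def f1_def f2_def f4_def f5_def f6_def o_def I_def Z_def D_def M_def using hyp by (auto simp: n_def distinct_map inj_on_def)
    then show ?thesis using Mm by simp
  qed
  have dV1: "distinct V1" unfolding V1_def f1_def f2_def f4_def f5_def f6_def o_def I_def Z_def D_def using hyp by (auto simp: n_def distinct_map inj_on_def)
  have dV2: "distinct V2" unfolding V2_def f1_def f2_def f4_def f5_def f6_def o_def I_def Z_def D_def using hyp by (auto simp: n_def distinct_map inj_on_def)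
  have dE2: "distinct E2" unfolding E2_def V2_def f1_def f2_def f4_def f5_def f6_def o_def I_def Z_def D_def M_def using hyp by (auto simp: n_def distinct_map inj_on_def; presburger)
  have rV1: "set V1 \<subseteq> {-int k..int k}" unfolding V1_def f1_def f2_def f4_def f5_def f6_def o_def I_def Z_def D_def K_def[symmetric] using hyp by (auto simp: n_def distinct_map inj_on_def)
  have rV2: "set V2 \<subseteq> {-int k..int k}" unfolding V2_def f1_def f2_def f4_def f5_def f6_def o_def I_def Z_def D_def K_def[symmetric] using hyp by (auto simp: n_def distinct_map inj_on_def)
  have rE2: "set E2 \<subseteq> {-int k..int k}" unfolding E2_def V2_def f1_def f2_def f4_def f5_def f6_def o_def I_def Z_def D_def M_def K_def[symmetric] using hyp by (auto simp: n_def distinct_map inj_on_def)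
  show ?thesis
    by (rule generic[OF m len cong VM EM dV1 dV2 dV1 dE2 rV1 rV2 rV1 rE2 lenV1 lenV1])
qed



lemma famY:
  fixes k j t s :: nat
  assumes m: "m = 2*k+1" and j: "j = 4*t+2" and k: "k = 3*t+1" and t: "t = 2*s"
  shows "Zm_cordial m (friendship_verts j) (friendship_edges j)"
proof -
  define T where "T = int t"
  define S where "S = int s"
  define K where "K = int k"
  define M where "M = 2*K+1"
  have hyp: "T = 2*S" "K = 3*T+1" "S \<ge> 0" using t k unfolding T_def S_def K_def by auto
  have Mm: "int m = M" unfolding M_def K_def m by simp
  define I where "I = [0..T-1]"
  define ps where "ps = (\<lambda>i::int. if i < S then 6*i+3 else 6*i-6*T)"
  define g1 where "g1 = (\<lambda>i::int. (3*i+1, 3*i+2, ps i))"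
  define g2 where "g2 = (\<lambda>i::int. (-(3*i+1), -(3*i+2), - ps i))"
  define g4 where "g4 = (\<lambda>i::int. (3*i+1, - ps i, -(3*i+2)))"
  define g5 where "g5 = (\<lambda>i::int. (-(3*i+1), ps i, 3*i+2))"
  define TL where "TL = map g1 I @ map g2 I @ [(K,-K,0),(K,-K,0)] @ map g4 I @ map g5 I"
  define V1 where "V1 = 0 # map (fst\<circ>g1) I @ map (fst\<circ>g2) I @ map ((fst\<circ>snd)\<circ>g1) I @ map ((fst\<circ>snd)\<circ>g2) I
      @ map ((fst\<circ>snd)\<circ>g4) I @ map ((fst\<circ>snd)\<circ>g5) I @ [K, -K]"
  define V2 where "V2 = map (fst\<circ>g4) I @ map (fst\<circ>g5) I @ [K, -K]"
  define E2 where "E2 = V2 @ map ((snd\<circ>snd)\<circ>g1) I @ map ((snd\<circ>snd)\<circ>g2) I @ map ((snd\<circ>snd)\<circ>g4) I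
      @ map ((snd\<circ>snd)\<circ>g5) I @ [0]"
  have len: "length TL = j"
  proof -
    have "int (length TL) = 4*T+2" unfolding TL_def I_def using hyp by auto
    then show ?thesis unfolding j T_def by simp
  qed
  have cong: "\<forall>t\<in>set TL. int m dvd (fst t + fst (snd t) - snd (snd t))"
    unfolding Mm TL_def g1_def g2_def g4_def g5_def ps_def M_def using hyp
    apply auto
    apply (rule dvdI[where k="-1"], simp)+
    done
  have VM: "mset V1 + mset V2 = add_mset 0 (mset (map fst TL) + mset (map (fst \<circ> snd) TL))"
    unfolding V1_def V2_def TL_def by (simp add: ac_simps add_mset_commute)
  have EM: "mset V1 + mset E2 = mset (map fst TL) + mset (map (fst \<circ> snd) TL) + mset (map (snd \<circ> snd) TL)"
    unfolding V1_def V2_def E2_def TL_def by (simp add: ac_simps add_mset_commute)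
  have lenV1: "length V1 = m"
  proof -
    have "int (length V1) = M" unfolding V1_def I_def M_def using hyp by auto
    then show ?thesis using Mm by simp
  qed
  have dV1: "distinct V1" unfolding V1_def g1_def g2_def g4_def g5_def o_def I_def ps_def using hyp
    by (auto simp: distinct_map inj_on_def split: if_splits; presburger)
  have dV2: "distinct V2" unfolding V2_def g1_def g2_def g4_def g5_def o_def I_def ps_def using hyp
    by (auto simp: distinct_map inj_on_def split: if_splits; presburger)
  have dE2: "distinct E2" unfolding E2_def V2_def g1_def g2_def g4_def g5_def o_def I_def ps_def using hyp
    by (auto simp: distinct_map inj_on_def split: if_splits; presburger)
  have rV1: "set V1 \<subseteq> {-int k..int k}" unfolding V1_def g1_def g2_def g4_def g5_def o_def I_def ps_def K_def[symmetric] using hyp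
    by (auto split: if_splits)
  have rV2: "set V2 \<subseteq> {-int k..int k}" unfolding V2_def g1_def g2_def g4_def g5_def o_def I_def ps_def K_def[symmetric] using hyp
    by (auto split: if_splits)
  have rE2: "set E2 \<subseteq> {-int k..int k}" unfolding E2_def V2_def g1_def g2_def g4_def g5_def o_def I_def ps_def K_def[symmetric] using hyp
    by (auto split: if_splits)
  show ?thesis
    by (rule generic[OF m len cong VM EM dV1 dV2 dV1 dE2 rV1 rV2 rV1 rE2 lenV1 lenV1])
qed



theorem theorem11p2:
  fixes m k j :: nat and \<epsilon> :: nat
  assumes "odd m" and "m = 2*k + 1"
    and "\<epsilon> = (if even k \<and> \<not> 3 dvd k then 1 else 0)"
    and "m div 2 \<le> j" and "int j \<le> int ((2*m) div 3) - int \<epsilon>"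
  shows "Zm_cordial m (friendship_verts j) (friendship_edges j)"
proof -
  have jle: "j + \<epsilon> \<le> (2*m) div 3" using assms(5) by linarith
  have kj: "k \<le> j" using assms(2,4) by simp
  show ?thesis
  proof (cases "k = 0")
    case True
    then have m1: "m = 1" and j0: "j = 0" using assms(2) jle by auto
    have "Zm_cordial_labeling m (friendship_verts j) (friendship_edges j) (\<lambda>_. 0)"
      unfolding Zm_cordial_labeling_def m1 by auto
    then show ?thesis unfolding Zm_cordial_def by blast
  next
    case False
    define r where "r = j - k"
    have j: "j = k + r" using kj r_def by simp
    show ?thesis
    proof (cases "3*r \<le> k+1")
      case True
      define p where "p = (if even (k - r) then (k - r) div 2 else (k - r + 1) div 2)"
      have rk: "r \<le> k" using True False by linarith
      have p1: "p \<ge> 1" using True False unfolding p_def by presburger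
      have np: "k - r = 2*p - 1 \<or> k - r = 2*p" unfolding p_def by presburger
      show ?thesis by (rule famX[OF assms(2) j True p1 np rk])
    next
      case F3: False
      have d3: "3 * ((2*m) div 3) \<le> 2*m" by simp
      have a0: "3*(j+\<epsilon>) \<le> 3*((2*m) div 3)" using jle by simp
      have a: "3*(k + r + \<epsilon>) \<le> 4*k+2" using a0 d3 unfolding j assms(2) by simp
      have e0: "\<epsilon> = 0" using a F3 by presburger
      have r3: "3*r = k+2" using a F3 by presburger
      have n3: "\<not> 3 dvd k" using r3 by presburger
      have ok: "odd k" using e0 n3 assms(3) by (auto split: if_splits)
      define t where "t = r - 1"
      define s where "s = t div 2"
      have kt: "k = 3*t+1" using r3 unfolding t_def by linarith
      have ts: "t = 2*s" using ok kt unfolding s_def by presburger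
      have jt: "j = 4*t+2" using j kt r3 unfolding t_def by linarith
      have ke: "k = 3*t+1 \<and> t = 2*s \<and> j = 4*t+2" using kt ts jt by blast
      show ?thesis by (rule famY[OF assms(2) jt kt ts])
    qed
  qed
qed


end
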